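(* On the noncommutative space $\mathbb{R}^4_\theta$ described in the context, let $f=\tfrac12(\sum_{i,j}g_{ij}z^iz^j-1)=\tfrac12(z^1z^3+z^2z^4-1)$ (a central element of $A$) and $B=A/(f)$ (the Connes–Landi sphere $\mathbb{S}^3_\theta$). Then the $1$-form $\nu:=\mathrm{d}f=\sum_{i,j=1}^4g_{ij}\,z^i\,\mathrm{d}z^j\in\Omega^1_A$ is central and satisfies $[g^{-1}(\nu\otimes_A\nu)]=1$ in $B$; hence $B$ is a noncommutative hypersurface of $A$ with $N^1_B$ having basis $[\nu]$. Moreover, the projector $\Pi:q_!(\Omega^1_A)\to q_!(\Omega^1_A)$, $[\omega]\mapsto[\omega-g^{-1}(\omega\otimes_A\nu)\nu]$, is given by $\Pi(\mathrm{d}z^i)=\mathrm{d}z^i-z^i\,\nu$ (as classes in $q_!(\Omega^1_A)$).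
   Context: Let $\theta\in\mathbb{R}$, $R=(R^{ab})$ the $4\times4$ matrix (row $a$, column $b$) with rows $(1,e^{-i\theta},1,e^{i\theta})$, $(e^{i\theta},1,e^{-i\theta},1)$, $(1,e^{i\theta},1,e^{-i\theta})$, $(e^{-i\theta},1,e^{i\theta},1)$; $A=\mathbb{C}\langle z^1,\dots,z^4\rangle/(z^iz^j-R^{ji}z^jz^i)$; $\Omega^1_A=\bigoplus_iA\,\mathrm{d}z^i$ free left module with $\mathrm{d}z^i\,z^j=R^{ji}z^j\mathrm{d}z^i$, $\mathrm{d}$ the Leibniz extension of $z^i\mapsto\mathrm{d}z^i$. $P$ the matrix with rows $(0,0,1,0),(0,0,0,1),(1,0,0,0),(0,1,0,0)$, $(g_{ij})=\tfrac12P$, $(g^{ij})=2P$, metric $g=\sum g_{ij}\mathrm{d}z^i\otimes_A\mathrm{d}z^j$, inverse metric $g^{-1}(\mathrm{d}z^i\otimes_A\mathrm{d}z^j)=g^{ij}$ extended left $A$-linearly. For a two-sided ideal $I\subset A$ and $B=A/I$ (classes $[\cdot]$, quotient $q$), $q_!(\Omega^1_A)=B\otimes_A\Omega^1_A\otimes_AB\cong\Omega^1_A/(I\Omega^1_A+\Omega^1_AI)$, $N^1_B$ is the $B$-subbimodule generated by $[\mathrm{d}a]$, $a\in I$, and $\Omega^1_B=q_!(\Omega^1_A)/N^1_B$. $B$ is a (metrically co-orientable) noncommutative hypersurface if $N^1_B$ is free of rank one with basis $[\nu]$ for some central $\nu\in\Omega^1_A$ with $[g^{-1}(\nu\otimes_A\nu)]=1$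 in $B$. *)

theory Defs
  imports Complex_Main "HOL-Library.Poly_Mapping" "HOL-Library.Function_Algebras"
begin

datatype idx = Z1 | Z2 | Z3 | Z4

lemma UNIV_idx: "(UNIV :: idx set) = {Z1, Z2, Z3, Z4}"
  using idx.exhaust by auto

instance idx :: finite
  by standard (simp add: UNIV_idx)

fun idx_num :: "idx \<Rightarrow> nat" where
  "idx_num Z1 = 0" | "idx_num Z2 = 1" | "idx_num Z3 = 2" | "idx_num Z4 = 3"

text \<open>R^{ab}: row a, column b.\<close>
definition Rmat :: "real \<Rightarrow> idx \<Rightarrow> idx \<Rightarrow> complex" where
  "Rmat \<theta> a b =
     [[1, cis (-\<theta>), 1, cis \<theta>],
      [cis \<theta>, 1, cis (-\<theta>), 1],
      [1, cis \<theta>, 1, cis (-\<theta>)],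
      [cis (-\<theta>), 1, cis \<theta>, 1]] ! idx_num a ! idx_num b"

definition Pmat :: "idx \<Rightarrow> idx \<Rightarrow> complex" where
  "Pmat a b =
     [[0, 0, 1, 0], [0, 0, 0, 1], [1, 0, 0, 0], [0, 1, 0, 0]] ! idx_num a ! idx_num b"

definition gmet :: "idx \<Rightarrow> idx \<Rightarrow> complex" where
  "gmet a b = Pmat a b / 2"

definition ginvmat :: "idx \<Rightarrow> idx \<Rightarrow> complex" where
  "ginvmat a b = 2 * Pmat a b"

type_synonym fa = "idx list \<Rightarrow>\<^sub>0 complex"

definition fmul :: "fa \<Rightarrow> fa \<Rightarrow> fa" where
  "fmul p q = (\<Sum>u\<in>Poly_Mapping.keys p. \<Sum>v\<in>Poly_Mapping.keys q.
                 Poly_Mapping.single (u @ v) (Poly_Mapping.lookup p u * Poly_Mapping.lookup q v))"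

definition mono :: "idx list \<Rightarrow> fa" where
  "mono w = Poly_Mapping.single w 1"

definition const :: "complex \<Rightarrow> fa" where
  "const c = Poly_Mapping.single [] c"

definition gen :: "idx \<Rightarrow> fa" where
  "gen i = mono [i]"

inductive_set tsideal :: "fa set \<Rightarrow> fa set" for S :: "fa set" where
  zero: "0 \<in> tsideal S"
| gen: "s \<in> S \<Longrightarrow> fmul (fmul u s) v \<in> tsideal S"
| add: "x \<in> tsideal S \<Longrightarrow> y \<in> tsideal S \<Longrightarrow> x + y \<in> tsideal S"

definition rels :: "real \<Rightarrow> fa set" where
  "rels \<theta> = {fmul (gen i) (gen j) - fmul (const (Rmat \<theta> j i)) (fmul (gen j) (gen i)) | i j. True}"

text \<open>A = free algebra / (rels). Elements of A are represented by elements of the free algebra;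
  eqA expresses equality of classes in A.\<close>
definition eqA :: "real \<Rightarrow> fa \<Rightarrow> fa \<Rightarrow> bool" where
  "eqA \<theta> p q \<longleftrightarrow> p - q \<in> tsideal (rels \<theta>)"

text \<open>B = A / I where I is the two-sided ideal of A generated by S; as a quotient of the
  free algebra, B = free algebra / (rels + S). Its ideal of representatives: \<close>
definition Jid :: "real \<Rightarrow> fa set \<Rightarrow> fa set" where
  "Jid \<theta> S = tsideal (rels \<theta> \<union> S)"

definition eqB :: "real \<Rightarrow> fa set \<Rightarrow> fa \<Rightarrow> fa \<Rightarrow> bool" where
  "eqB \<theta> S p q \<longleftrightarrow> p - q \<in> Jid \<theta> S"

text \<open>A 1-form sum_i a_i dz^i (free left A-module) is represented by its coefficient
  function i |-> a_i.\<close>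
type_synonym form1 = "idx \<Rightarrow> fa"

definition eqOmega :: "real \<Rightarrow> form1 \<Rightarrow> form1 \<Rightarrow> bool" where
  "eqOmega \<theta> \<omega> \<eta> \<longleftrightarrow> (\<forall>k. eqA \<theta> (\<omega> k) (\<eta> k))"

definition dz :: "idx \<Rightarrow> form1" where
  "dz i = (\<lambda>k. if k = i then const 1 else 0)"

definition lmul :: "fa \<Rightarrow> form1 \<Rightarrow> form1" where
  "lmul a \<omega> = (\<lambda>k. fmul a (\<omega> k))"

text \<open>dz^i p = twist i p dz^i, from dz^i z^j = R^{ji} z^j dz^i.\<close>
definition twist :: "real \<Rightarrow> idx \<Rightarrow> fa \<Rightarrow> fa" where
  "twist \<theta> i p = (\<Sum>w\<in>Poly_Mapping.keys p.
      Poly_Mapping.single w (Poly_Mapping.lookup p w * prod_list (map (\<lambda>j. Rmat \<theta> j i) w)))"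

definition rmul :: "real \<Rightarrow> form1 \<Rightarrow> fa \<Rightarrow> form1" where
  "rmul \<theta> \<omega> p = (\<lambda>k. fmul (\<omega> k) (twist \<theta> k p))"

text \<open>d: Leibniz extension of z^i |-> dz^i.\<close>
fun dword :: "real \<Rightarrow> idx list \<Rightarrow> form1" where
  "dword \<theta> [] = 0"
| "dword \<theta> (j # w) = rmul \<theta> (dz j) (mono w) + lmul (gen j) (dword \<theta> w)"

definition dA :: "real \<Rightarrow> fa \<Rightarrow> form1" where
  "dA \<theta> p = (\<Sum>w\<in>Poly_Mapping.keys p. lmul (const (Poly_Mapping.lookup p w)) (dword \<theta> w))"

text \<open>g^{-1}(omega \<otimes>_A eta), extended left A-linearly: for omega = sum a_i dz^i and
  eta = sum b_j dz^j, omega \<otimes> eta = sum a_i (twist i b_j) dz^i \<otimes> dz^j.\<close>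
definition ginv2 :: "real \<Rightarrow> form1 \<Rightarrow> form1 \<Rightarrow> fa" where
  "ginv2 \<theta> \<omega> \<eta> = (\<Sum>i\<in>UNIV. \<Sum>j\<in>UNIV.
      fmul (const (ginvmat i j)) (fmul (\<omega> i) (twist \<theta> i (\<eta> j))))"

definition central_form :: "real \<Rightarrow> form1 \<Rightarrow> bool" where
  "central_form \<theta> \<nu> \<longleftrightarrow> (\<forall>a. eqOmega \<theta> (lmul a \<nu>) (rmul \<theta> \<nu> a))"

text \<open>Representatives of zero in q_!(Omega^1_A) = Omega^1_A / (I Omega^1_A + Omega^1_A I).\<close>
inductive_set qzero :: "real \<Rightarrow> fa set \<Rightarrow> form1 set" for \<theta> S where
  zeroA: "eqOmega \<theta> \<omega> 0 \<Longrightarrow> \<omega> \<in> qzero \<theta> S"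
| left: "x \<in> Jid \<theta> S \<Longrightarrow> lmul x \<omega> \<in> qzero \<theta> S"
| right: "y \<in> Jid \<theta> S \<Longrightarrow> rmul \<theta> \<omega> y \<in> qzero \<theta> S"
| add: "\<omega> \<in> qzero \<theta> S \<Longrightarrow> \<eta> \<in> qzero \<theta> S \<Longrightarrow> \<omega> + \<eta> \<in> qzero \<theta> S"

definition eqQ :: "real \<Rightarrow> fa set \<Rightarrow> form1 \<Rightarrow> form1 \<Rightarrow> bool" where
  "eqQ \<theta> S \<omega> \<eta> \<longleftrightarrow> \<omega> - \<eta> \<in> qzero \<theta> S"

text \<open>Representatives of elements of the B-subbimodule N^1_B generated by [da], a in I.\<close>
inductive_set Nsub :: "real \<Rightarrow> fa set \<Rightarrow> form1 set" for \<theta> S where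
  zero: "0 \<in> Nsub \<theta> S"
| gen: "a \<in> Jid \<theta> S \<Longrightarrow> lmul u (rmul \<theta> (dA \<theta> a) v) \<in> Nsub \<theta> S"
| add: "\<omega> \<in> Nsub \<theta> S \<Longrightarrow> \<eta> \<in> Nsub \<theta> S \<Longrightarrow> \<omega> + \<eta> \<in> Nsub \<theta> S"

definition inN :: "real \<Rightarrow> fa set \<Rightarrow> form1 \<Rightarrow> bool" where
  "inN \<theta> S \<omega> \<longleftrightarrow> (\<exists>\<eta>\<in>Nsub \<theta> S. eqQ \<theta> S \<omega> \<eta>)"

text \<open>N^1_B is a free (left) B-module of rank one with basis [nu].\<close>
definition N_free_basis :: "real \<Rightarrow> fa set \<Rightarrow> form1 \<Rightarrow> bool" where
  "N_free_basis \<theta> S \<nu> \<longleftrightarrow>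
     inN \<theta> S \<nu> \<and>
     (\<forall>\<omega>. inN \<theta> S \<omega> \<longleftrightarrow> (\<exists>b. eqQ \<theta> S \<omega> (lmul b \<nu>))) \<and>
     (\<forall>b. eqQ \<theta> S (lmul b \<nu>) 0 \<longrightarrow> eqB \<theta> S b 0)"

definition nc_hypersurface :: "real \<Rightarrow> fa set \<Rightarrow> bool" where
  "nc_hypersurface \<theta> S \<longleftrightarrow>
     (\<exists>\<nu>. central_form \<theta> \<nu> \<and> eqB \<theta> S (ginv2 \<theta> \<nu> \<nu>) (const 1) \<and> N_free_basis \<theta> S \<nu>)"

definition Proj :: "real \<Rightarrow> form1 \<Rightarrow> form1 \<Rightarrow> form1" where
  "Proj \<theta> \<nu> \<omega> = \<omega> - lmul (ginv2 \<theta> \<omega> \<nu>) \<nu>"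

end

theory Submission
  imports Defs
begin


instantiation list :: (type) monoid_add
begin
definition zero_list_def: "0 = ([] :: 'a list)"
definition plus_list_def: "(xs :: 'a list) + ys = xs @ ys"
instance by standard (simp_all add: zero_list_def plus_list_def)
end

lemma sum_single_lookup:
  fixes p :: "'a \<Rightarrow>\<^sub>0 'b::comm_monoid_add"
  assumes "finite S" "Poly_Mapping.keys p \<subseteq> S"
  shows "(\<Sum>a\<in>S. Poly_Mapping.single a (Poly_Mapping.lookup p a)) = p"
proof (rule poly_mapping_eqI)
  fix k
  have "Poly_Mapping.lookup (\<Sum>a\<in>S. Poly_Mapping.single a (Poly_Mapping.lookup p a)) k
      = (\<Sum>a\<in>S. if a = k then Poly_Mapping.lookup p a else 0)"
    by (simp add: lookup_sum lookup_single when_def eq_commute)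
  also have "\<dots> = Poly_Mapping.lookup p k"
    using assms by (auto simp: sum.delta in_keys_iff)
  finally show "Poly_Mapping.lookup (\<Sum>a\<in>S. Poly_Mapping.single a (Poly_Mapping.lookup p a)) k = Poly_Mapping.lookup p k" .
qed

lemma fmul_eq[simp]: "fmul p q = p * q"
proof -
  have "p * q = (\<Sum>u\<in>Poly_Mapping.keys p. Poly_Mapping.single u (Poly_Mapping.lookup p u)) *
                (\<Sum>v\<in>Poly_Mapping.keys q. Poly_Mapping.single v (Poly_Mapping.lookup q v))"
    by (simp add: sum_single_lookup)
  also have "\<dots> = fmul p q"
    by (simp add: fmul_def sum_distrib_left sum_distrib_right mult_single plus_list_def sum.swap[of _ "Poly_Mapping.keys q"])
  finally show ?thesis by simp
qed


lemma sum_fun_apply: "(\<Sum>x\<in>S. (f x :: 'a \<Rightarrow> 'b::comm_monoid_add)) k = (\<Sum>x\<in>S. f x k)"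
  by (induction S rule: infinite_finite_induct) auto

lemma const_single: "const c = Poly_Mapping.single [] c" by (simp add: const_def)
lemma const_0[simp]: "const 0 = 0" by (simp add: const_def)
lemma const_1[simp]: "const 1 = 1" by (simp add: const_def zero_list_def[symmetric])
lemma const_add: "const (a + b) = const a + const b" by (simp add: const_def single_add)
lemma const_diff: "const (a - b) = const a - const b" by (simp add: const_def single_diff)
lemma const_mult: "const (a * b) = const a * const b"
  by (simp add: const_def mult_single plus_list_def)

lemma expand: "p = (\<Sum>w\<in>Poly_Mapping.keys p. Poly_Mapping.single w (Poly_Mapping.lookup p w))"
  by (simp add: sum_single_lookup)

lemma const_commute: "const c * p = p * const c"
proof -
  have "const c * p = (\<Sum>w\<in>Poly_Mapping.keys p. const c * Poly_Mapping.single w (Poly_Mapping.lookup p w))"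
    by (subst expand[of p]) (simp add: sum_distrib_left)
  also have "\<dots> = (\<Sum>w\<in>Poly_Mapping.keys p. Poly_Mapping.single w (Poly_Mapping.lookup p w) * const c)"
    by (intro sum.cong refl) (simp add: const_def mult_single plus_list_def mult.commute)
  also have "\<dots> = p * const c"
    by (subst (2) expand[of p]) (simp add: sum_distrib_right)
  finally show ?thesis .
qed

lemma const_mult_expand: "const c * p = (\<Sum>w\<in>Poly_Mapping.keys p. Poly_Mapping.single w (c * Poly_Mapping.lookup p w))"
  by (subst expand[of p]) (simp add: sum_distrib_left const_def mult_single plus_list_def)

lemma lookup_sum_single:
  assumes "finite S"
  shows "Poly_Mapping.lookup (\<Sum>w\<in>S. Poly_Mapping.single w (h w)) k = (if k \<in> S then h k else 0)"
  using assms by (simp add: lookup_sum lookup_single when_def sum.delta eq_commute cong: if_cong)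

lemma lookup_const_mult: "Poly_Mapping.lookup (const c * p) k = c * Poly_Mapping.lookup p k"
  by (simp add: const_mult_expand lookup_sum_single in_keys_iff)

lemma gen_single: "gen i = Poly_Mapping.single [i] 1" by (simp add: gen_def mono_def)

lemma mono_Nil: "mono [] = 1" by (simp add: mono_def zero_list_def[symmetric])
lemma mono_Cons: "mono (i # w) = gen i * mono w"
  by (simp add: mono_def gen_def mult_single plus_list_def)

lemma single_const_mono: "Poly_Mapping.single w c = const c * mono w"
  by (simp add: mono_def const_def mult_single plus_list_def)

lemma fa_induct[case_names const gen add mult]:
  assumes C: "\<And>c. P (const c)" and G: "\<And>i. P (gen i)"
    and A: "\<And>a b. P a \<Longrightarrow> P b \<Longrightarrow> P (a + b)"
    and M: "\<And>a b. P a \<Longrightarrow> P b \<Longrightarrow> P (a * b)"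
  shows "P x"
proof -
  have mono: "P (mono w)" for w
  proof (induction w)
    case Nil then show ?case using C[of 1] by (simp add: mono_Nil)
  next
    case (Cons i w) then show ?case using G M by (simp add: mono_Cons)
  qed
  have sum: "P (\<Sum>w\<in>S. Poly_Mapping.single w (h w))" if "finite S" for S h
    using that
  proof (induction S rule: finite_induct)
    case empty then show ?case using C[of 0] by simp
  next
    case (insert a S) then show ?case using A M C mono by (simp add: single_const_mono)
  qed
  show ?thesis by (subst expand) (rule sum, simp)
qed

definition wt :: "real \<Rightarrow> idx \<Rightarrow> idx list \<Rightarrow> complex" where
  "wt \<theta> i w = prod_list (map (\<lambda>j. Rmat \<theta> j i) w)"

lemma lookup_twist: "Poly_Mapping.lookup (twist \<theta> i p) w = Poly_Mapping.lookup p w * wt \<theta> i w"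
  by (simp add: twist_def wt_def[symmetric] lookup_sum_single in_keys_iff)

lemma twist_add: "twist \<theta> i (p + q) = twist \<theta> i p + twist \<theta> i q"
  by (rule poly_mapping_eqI) (simp add: lookup_twist lookup_add algebra_simps)
lemma twist_diff: "twist \<theta> i (p - q) = twist \<theta> i p - twist \<theta> i q"
  by (rule poly_mapping_eqI) (simp add: lookup_twist lookup_minus algebra_simps)
lemma twist_zero[simp]: "twist \<theta> i 0 = 0"
  by (rule poly_mapping_eqI) (simp add: lookup_twist)
lemma twist_sum: "twist \<theta> i (\<Sum>x\<in>S. f x) = (\<Sum>x\<in>S. twist \<theta> i (f x))"
  by (rule poly_mapping_eqI) (simp add: lookup_twist lookup_sum sum_distrib_right)
lemma twist_single: "twist \<theta> i (Poly_Mapping.single w c) = Poly_Mapping.single w (c * wt \<theta> i w)"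
  by (rule poly_mapping_eqI) (simp add: lookup_twist lookup_single when_def)

lemma twist_mult: "twist \<theta> i (p * q) = twist \<theta> i p * twist \<theta> i q"
proof -
  have "twist \<theta> i (p * q) = twist \<theta> i ((\<Sum>u\<in>Poly_Mapping.keys p. Poly_Mapping.single u (Poly_Mapping.lookup p u)) *
                (\<Sum>v\<in>Poly_Mapping.keys q. Poly_Mapping.single v (Poly_Mapping.lookup q v)))"
    by (simp add: sum_single_lookup)
  also have "\<dots> = (\<Sum>u\<in>Poly_Mapping.keys p. twist \<theta> i (Poly_Mapping.single u (Poly_Mapping.lookup p u))) *
                (\<Sum>v\<in>Poly_Mapping.keys q. twist \<theta> i (Poly_Mapping.single v (Poly_Mapping.lookup q v)))"
    by (simp add: sum_distrib_left sum_distrib_right twist_sum twist_single mult_single plus_list_def wt_def mult_ac)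
  also have "\<dots> = twist \<theta> i p * twist \<theta> i q"
    by (simp add: twist_sum[symmetric] sum_single_lookup)
  finally show ?thesis .
qed

lemma twist_const[simp]: "twist \<theta> i (const c) = const c"
  by (simp add: const_def twist_single wt_def)
lemma twist_one[simp]: "twist \<theta> i 1 = 1"
  using twist_const[of \<theta> i 1] by simp
lemma twist_gen: "twist \<theta> i (gen j) = const (Rmat \<theta> j i) * gen j"
  by (simp add: gen_single twist_single wt_def const_def mult_single plus_list_def)
lemma twist_neg: "twist \<theta> i (- p) = - twist \<theta> i p"
  using twist_diff[of \<theta> i 0 p] by simp



lemma ts_base: "s \<in> S \<Longrightarrow> s \<in> tsideal S"
  using tsideal.gen[of s S 1 1] by simp
lemma ts_left: "x \<in> tsideal S \<Longrightarrow> a * x \<in> tsideal S"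
proof (induction rule: tsideal.induct)
  case zero then show ?case by (simp add: tsideal.zero)
next
  case (gen s u v) then show ?case using tsideal.gen[of s S "a*u" v] by (simp add: mult.assoc)
next
  case (add x y) then show ?case using tsideal.add by (simp add: distrib_left)
qed
lemma ts_right: "x \<in> tsideal S \<Longrightarrow> x * a \<in> tsideal S"
proof (induction rule: tsideal.induct)
  case zero then show ?case by (simp add: tsideal.zero)
next
  case (gen s u v) then show ?case using tsideal.gen[of s S u "v*a"] by (simp add: mult.assoc)
next
  case (add x y) then show ?case using tsideal.add by (simp add: distrib_right)
qed
lemma ts_add: "x \<in> tsideal S \<Longrightarrow> y \<in> tsideal S \<Longrightarrow> x + y \<in> tsideal S"
  by (rule tsideal.add)
lemma ts_zero: "0 \<in> tsideal S" by (rule tsideal.zero)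
lemma ts_neg: "x \<in> tsideal S \<Longrightarrow> - x \<in> tsideal S"
  using ts_left[of x S "-1"] by simp
lemma ts_diff: assumes "x \<in> tsideal S" "y \<in> tsideal S" shows "x - y \<in> tsideal S"
  using ts_add[OF assms(1) ts_neg[OF assms(2)]] by simp
lemma ts_sum: "(\<And>x. x \<in> A \<Longrightarrow> f x \<in> tsideal S) \<Longrightarrow> (\<Sum>x\<in>A. f x) \<in> tsideal S"
  by (induction A rule: infinite_finite_induct) (auto intro: ts_zero ts_add)
lemma ts_mono: assumes "S \<subseteq> T" "x \<in> tsideal S" shows "x \<in> tsideal T"
  using assms(2) proof (induction rule: tsideal.induct)
  case zero then show ?case by (simp add: tsideal.zero)
next
  case (gen s u v) then show ?case using tsideal.gen[of s T u v] assms(1) by auto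
next
  case (add x y) then show ?case using tsideal.add by auto
qed

lemma twist_ideal:
  assumes "\<And>s. s \<in> S \<Longrightarrow> twist \<theta> i s \<in> tsideal S"
  shows "x \<in> tsideal S \<Longrightarrow> twist \<theta> i x \<in> tsideal S"
proof (induction rule: tsideal.induct)
  case zero then show ?case by (simp add: tsideal.zero)
next
  case (gen s u v) then show ?case using assms[of s] by (simp add: twist_mult ts_left ts_right)
next
  case (add x y) then show ?case using tsideal.add by (simp add: twist_add)
qed

lemma lmul_apply[simp]: "lmul a \<omega> k = a * \<omega> k" by (simp add: lmul_def)
lemma rmul_apply[simp]: "rmul \<theta> \<omega> p k = \<omega> k * twist \<theta> k p" by (simp add: rmul_def)

lemma lmul_add1: "lmul (a + b) \<omega> = lmul a \<omega> + lmul b \<omega>" by (rule ext) (simp add: distrib_right)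
lemma lmul_add2: "lmul a (\<omega> + \<eta>) = lmul a \<omega> + lmul a \<eta>" by (rule ext) (simp add: distrib_left)
lemma lmul_diff1: "lmul (a - b) \<omega> = lmul a \<omega> - lmul b \<omega>" by (rule ext) (simp add: left_diff_distrib)
lemma lmul_diff2: "lmul a (\<omega> - \<eta>) = lmul a \<omega> - lmul a \<eta>" by (rule ext) (simp add: right_diff_distrib)
lemma lmul_zero1[simp]: "lmul 0 \<omega> = 0" by (rule ext) simp
lemma lmul_zero2[simp]: "lmul a 0 = 0" by (rule ext) simp
lemma lmul_one[simp]: "lmul 1 \<omega> = \<omega>" by (rule ext) simp
lemma lmul_lmul: "lmul a (lmul b \<omega>) = lmul (a * b) \<omega>" by (rule ext) (simp add: mult.assoc)
lemma lmul_sum2: "lmul a (\<Sum>x\<in>S. f x) = (\<Sum>x\<in>S. lmul a (f x))"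
  by (rule ext) (simp add: sum_fun_apply sum_distrib_left)
lemma rmul_add1: "rmul \<theta> (\<omega> + \<eta>) p = rmul \<theta> \<omega> p + rmul \<theta> \<eta> p" by (rule ext) (simp add: distrib_right)
lemma rmul_add2: "rmul \<theta> \<omega> (p + q) = rmul \<theta> \<omega> p + rmul \<theta> \<omega> q" by (rule ext) (simp add: twist_add distrib_left)
lemma rmul_diff1: "rmul \<theta> (\<omega> - \<eta>) p = rmul \<theta> \<omega> p - rmul \<theta> \<eta> p" by (rule ext) (simp add: left_diff_distrib)
lemma rmul_zero1[simp]: "rmul \<theta> 0 p = 0" by (rule ext) simp
lemma rmul_zero2[simp]: "rmul \<theta> \<omega> 0 = 0" by (rule ext) simp
lemma rmul_one[simp]: "rmul \<theta> \<omega> 1 = \<omega>" by (rule ext) simp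
lemma rmul_rmul: "rmul \<theta> (rmul \<theta> \<omega> p) q = rmul \<theta> \<omega> (p * q)" by (rule ext) (simp add: twist_mult mult.assoc)
lemma rmul_lmul: "rmul \<theta> (lmul a \<omega>) q = lmul a (rmul \<theta> \<omega> q)" by (rule ext) (simp add: mult.assoc)
lemma rmul_sum1: "rmul \<theta> (\<Sum>x\<in>S. f x) p = (\<Sum>x\<in>S. rmul \<theta> (f x) p)"
  by (rule ext) (simp add: sum_fun_apply sum_distrib_right)
lemma rmul_sum2: "rmul \<theta> \<omega> (\<Sum>x\<in>S. f x) = (\<Sum>x\<in>S. rmul \<theta> \<omega> (f x))"
  by (rule ext) (simp add: sum_fun_apply sum_distrib_left twist_sum)
lemma rmul_const: "rmul \<theta> \<omega> (const c * p) = lmul (const c) (rmul \<theta> \<omega> p)"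
proof (rule ext)
  fix k
  have "\<omega> k * (const c * twist \<theta> k p) = const c * (\<omega> k * twist \<theta> k p)"
    by (metis mult.assoc const_commute)
  then show "rmul \<theta> \<omega> (const c * p) k = lmul (const c) (rmul \<theta> \<omega> p) k" by (simp add: twist_mult)
qed

lemma dA_superset:
  assumes "finite S" "Poly_Mapping.keys p \<subseteq> S"
  shows "dA \<theta> p = (\<Sum>w\<in>S. lmul (const (Poly_Mapping.lookup p w)) (dword \<theta> w))"
  unfolding dA_def using assms
  by (intro sum.mono_neutral_left) (auto simp: in_keys_iff)

lemma dA_add: "dA \<theta> (p + q) = dA \<theta> p + dA \<theta> q"
proof -
  let ?S = "Poly_Mapping.keys p \<union> Poly_Mapping.keys q"
  have k: "Poly_Mapping.keys (p + q) \<subseteq> ?S" by (rule keys_add)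
  show ?thesis
    by (simp add: dA_superset[OF _ k] dA_superset[of ?S p] dA_superset[of ?S q]
        lookup_add const_add lmul_add1 sum.distrib)
qed
lemma dA_zero[simp]: "dA \<theta> 0 = 0" by (simp add: dA_def)
lemma dA_sum: "dA \<theta> (\<Sum>x\<in>S. f x) = (\<Sum>x\<in>S. dA \<theta> (f x))"
  by (induction S rule: infinite_finite_induct) (auto simp: dA_add)
lemma dA_neg: "dA \<theta> (- p) = - dA \<theta> p"
proof -
  have "dA \<theta> p + dA \<theta> (-p) = 0" using dA_add[of \<theta> p "-p"] by simp
  then show ?thesis by (metis eq_neg_iff_add_eq_0 add.commute)
qed
lemma dA_diff: "dA \<theta> (p - q) = dA \<theta> p - dA \<theta> q"
  using dA_add[of \<theta> p "-q"] by (simp add: dA_neg)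

lemma dA_const_mult: "dA \<theta> (const c * p) = lmul (const c) (dA \<theta> p)"
proof -
  have k: "Poly_Mapping.keys (const c * p) \<subseteq> Poly_Mapping.keys p"
    by (auto simp: in_keys_iff lookup_const_mult)
  have "dA \<theta> (const c * p) = (\<Sum>w\<in>Poly_Mapping.keys p. lmul (const (Poly_Mapping.lookup (const c * p) w)) (dword \<theta> w))"
    by (rule dA_superset[OF _ k]) simp
  also have "\<dots> = lmul (const c) (dA \<theta> p)"
    by (simp add: dA_def lookup_const_mult const_mult lmul_sum2 lmul_lmul)
  finally show ?thesis .
qed

lemma dA_mono: "dA \<theta> (mono w) = dword \<theta> w"
  by (simp add: mono_def dA_def)

lemma dA_const[simp]: "dA \<theta> (const c) = 0"
  using dA_const_mult[of \<theta> c 1] by (simp add: dA_mono[of \<theta> "[]", unfolded mono_Nil])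



declare lmul_apply[simp del] rmul_apply[simp del]

lemma dA_gen_mult: "dA \<theta> (gen i * q) = rmul \<theta> (dz i) q + lmul (gen i) (dA \<theta> q)"
proof -
  define K where "K = Poly_Mapping.keys q"
  define c where "c = (\<lambda>w. Poly_Mapping.lookup q w)"
  have q: "q = (\<Sum>w\<in>K. const (c w) * mono w)"
    unfolding K_def c_def by (subst expand) (simp add: single_const_mono)
  have dq: "dA \<theta> q = (\<Sum>w\<in>K. lmul (const (c w)) (dword \<theta> w))"
    unfolding K_def c_def dA_def ..
  have gm: "gen i * (const a * mono w) = const a * mono (i # w)" for a w
      by (metis mult.assoc const_commute mono_Cons)
  have "dA \<theta> (gen i * q) = (\<Sum>w\<in>K. dA \<theta> (const (c w) * mono (i # w)))"
    by (subst q) (simp add: sum_distrib_left dA_sum gm)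
  also have "\<dots> = (\<Sum>w\<in>K. lmul (const (c w)) (rmul \<theta> (dz i) (mono w)) + lmul (const (c w)) (lmul (gen i) (dword \<theta> w)))"
    by (simp add: dA_const_mult dA_mono lmul_add2)
  also have "\<dots> = (\<Sum>w\<in>K. lmul (const (c w)) (rmul \<theta> (dz i) (mono w))) + (\<Sum>w\<in>K. lmul (gen i) (lmul (const (c w)) (dword \<theta> w)))"
    by (simp add: sum.distrib lmul_lmul const_commute)
  also have "(\<Sum>w\<in>K. lmul (const (c w)) (rmul \<theta> (dz i) (mono w))) = rmul \<theta> (dz i) q"
    by (subst q) (simp add: rmul_sum2 rmul_const)
  also have "(\<Sum>w\<in>K. lmul (gen i) (lmul (const (c w)) (dword \<theta> w))) = lmul (gen i) (dA \<theta> q)"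
    by (simp add: dq lmul_sum2)
  finally show ?thesis .
qed

lemma dA_gen[simp]: "dA \<theta> (gen i) = dz i"
  by (simp add: gen_def dA_mono mono_Nil)

lemma leibniz: "dA \<theta> (p * q) = rmul \<theta> (dA \<theta> p) q + lmul p (dA \<theta> q)"
proof (induction p arbitrary: q rule: fa_induct)
  case (const c) then show ?case by (simp add: dA_const_mult fun_eq_iff rmul_apply lmul_apply)
next
  case (gen i) then show ?case by (simp add: dA_gen_mult)
next
  case (add a b) then show ?case by (simp add: distrib_right dA_add fun_eq_iff rmul_apply lmul_apply algebra_simps)
next
  case (mult a b) then show ?case
    by (simp add: mult.assoc fun_eq_iff rmul_apply lmul_apply algebra_simps twist_mult)
qed



fun opp :: "idx \<Rightarrow> idx" where
  "opp Z1 = Z3" | "opp Z2 = Z4" | "opp Z3 = Z1" | "opp Z4 = Z2"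

lemma cis_inv[simp]: "cis \<theta> * cis (-\<theta>) = 1" "cis (-\<theta>) * cis \<theta> = 1"
  by (simp_all add: cis_mult)

lemma R_diag[simp]: "Rmat \<theta> i i = 1"
  by (cases i) (simp_all add: Rmat_def)

lemma R_opp: "Rmat \<theta> (opp k) j = Rmat \<theta> j k"
  by (cases k; cases j) (simp_all add: Rmat_def)

lemma R_13: "Rmat \<theta> j Z3 * Rmat \<theta> j Z1 = 1" "Rmat \<theta> j Z4 * Rmat \<theta> j Z2 = 1"
  by (cases j; simp add: Rmat_def)+

lemma R_vals: "Rmat \<theta> Z1 Z3 = 1" "Rmat \<theta> Z3 Z1 = 1" "Rmat \<theta> Z2 Z4 = 1" "Rmat \<theta> Z4 Z2 = 1"
  by (simp_all add: Rmat_def)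

lemma R_twist: "Rmat \<theta> Z1 k * Rmat \<theta> Z3 k = 1" "Rmat \<theta> Z2 k * Rmat \<theta> Z4 k = 1"
  by (cases k; simp add: Rmat_def)+

lemma R_rel: "Rmat \<theta> i k * Rmat \<theta> j k * Rmat \<theta> j i = Rmat \<theta> j i * Rmat \<theta> j k * Rmat \<theta> i k"
  by (simp add: mult_ac)

lemma R_inv: "Rmat \<theta> i j * Rmat \<theta> j i = 1"
  by (cases i; cases j) (simp_all add: Rmat_def)


definition fS :: "fa" where
  "fS = const (1/2) * (gen Z1 * gen Z3 + gen Z2 * gen Z4 - 1)"

definition N :: "form1" where
  "N = (\<lambda>k. const (1/2) * gen (opp k))"

lemma swap: "gen i * gen j - const (Rmat \<theta> j i) * (gen j * gen i) \<in> tsideal (rels \<theta>)"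
  by (rule ts_base) (auto simp: rels_def)

lemma const_in: "const c * (x * y) = x * (const c * y)"
  by (metis mult.assoc const_commute)

lemma swap_mid: "u * (gen i * gen j) * v - const (Rmat \<theta> j i) * (u * (gen j * gen i) * v) \<in> tsideal (rels \<theta>)"
proof -
  have "u * (gen i * gen j - const (Rmat \<theta> j i) * (gen j * gen i)) * v \<in> tsideal (rels \<theta>)"
    by (intro ts_left ts_right swap)
  moreover have "u * (gen i * gen j - const (Rmat \<theta> j i) * (gen j * gen i)) * v
     = u * (gen i * gen j) * v - const (Rmat \<theta> j i) * (u * (gen j * gen i) * v)"
    by (simp add: right_diff_distrib left_diff_distrib const_in mult.assoc)
  ultimately show ?thesis by simp
qed

lemma swap3:
  assumes "Rmat \<theta> j b * Rmat \<theta> j a = 1"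
  shows "gen a * gen b * gen j - gen j * (gen a * gen b) \<in> tsideal (rels \<theta>)"
proof -
  have h1: "gen a * (gen b * gen j) * 1 - const (Rmat \<theta> j b) * (gen a * (gen j * gen b) * 1) \<in> tsideal (rels \<theta>)"
    by (rule swap_mid)
  have h2: "const (Rmat \<theta> j b) * (1 * (gen a * gen j) * gen b - const (Rmat \<theta> j a) * (1 * (gen j * gen a) * gen b)) \<in> tsideal (rels \<theta>)"
    by (intro ts_left swap_mid)
  have cc: "const (Rmat \<theta> j b) * (const (Rmat \<theta> j a) * y) = y" for y
    using assms by (simp add: mult.assoc[symmetric] const_mult[symmetric])
  have "gen a * gen b * gen j - gen j * (gen a * gen b) =
     (gen a * (gen b * gen j) * 1 - const (Rmat \<theta> j b) * (gen a * (gen j * gen b) * 1)) +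
     const (Rmat \<theta> j b) * (1 * (gen a * gen j) * gen b - const (Rmat \<theta> j a) * (1 * (gen j * gen a) * gen b))"
    by (simp add: algebra_simps cc)
  then show ?thesis using ts_add[OF h1 h2] by simp
qed

lemma f_gen: "gen j * fS - fS * gen j \<in> tsideal (rels \<theta>)"
proof -
  have a: "gen Z1 * gen Z3 * gen j - gen j * (gen Z1 * gen Z3) \<in> tsideal (rels \<theta>)"
    by (rule swap3) (rule R_13)
  have b: "gen Z2 * gen Z4 * gen j - gen j * (gen Z2 * gen Z4) \<in> tsideal (rels \<theta>)"
    by (rule swap3) (rule R_13)
  have "gen j * fS - fS * gen j = const (1/2) * ((gen j * (gen Z1 * gen Z3) - gen Z1 * gen Z3 * gen j) + (gen j * (gen Z2 * gen Z4) - gen Z2 * gen Z4 * gen j))"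
    unfolding fS_def using const_commute[of "1/2" "gen j"] by (simp add: algebra_simps const_in)
  moreover have "\<dots> \<in> tsideal (rels \<theta>)"
    using a b by (intro ts_left ts_add) (auto dest: ts_neg)
  ultimately show ?thesis by simp
qed

lemma f_central: "a * fS - fS * a \<in> tsideal (rels \<theta>)"
proof (induction a rule: fa_induct)
  case (const c) then show ?case by (simp add: const_commute ts_zero)
next
  case (gen i) then show ?case by (rule f_gen)
next
  case (add a b)
  have "(a + b) * fS - fS * (a + b) = (a * fS - fS * a) + (b * fS - fS * b)" by (simp add: algebra_simps)
  then show ?case using add by (simp add: ts_add)
next
  case (mult a b)
  have "(a * b) * fS - fS * (a * b) = a * (b * fS - fS * b) + (a * fS - fS * a) * b" by (simp add: algebra_simps)
  then show ?case using mult by (simp add: ts_add ts_left ts_right)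
qed

lemma dA_one[simp]: "dA \<theta> 1 = 0" using dA_const[of \<theta> 1] by simp

lemma nu_eq: "dA \<theta> fS = N"
proof -
  have "dA \<theta> (gen Z1 * gen Z3 + gen Z2 * gen Z4 - 1) =
     rmul \<theta> (dz Z1) (gen Z3) + lmul (gen Z1) (dz Z3) + (rmul \<theta> (dz Z2) (gen Z4) + lmul (gen Z2) (dz Z4))"
    by (simp only: dA_diff dA_add leibniz dA_gen dA_one diff_zero)
  then have "dA \<theta> fS = lmul (const (1/2)) (rmul \<theta> (dz Z1) (gen Z3) + lmul (gen Z1) (dz Z3) + (rmul \<theta> (dz Z2) (gen Z4) + lmul (gen Z2) (dz Z4)))"
    unfolding fS_def by (simp only: dA_const_mult)
  also have "\<dots> = N"
  proof (rule ext)
    fix k show "lmul (const (1/2)) (rmul \<theta> (dz Z1) (gen Z3) + lmul (gen Z1) (dz Z3) + (rmul \<theta> (dz Z2) (gen Z4) + lmul (gen Z2) (dz Z4))) k = N k"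
      by (cases k) (simp_all add: N_def lmul_apply rmul_apply dz_def twist_gen R_vals)
  qed
  finally show ?thesis .
qed

lemma N_central: "a * N k - N k * twist \<theta> k a \<in> tsideal (rels \<theta>)"
proof (induction a rule: fa_induct)
  case (const c) then show ?case by (simp add: const_commute[of c "N k"] ts_zero)
next
  case (gen j)
  have "gen j * N k - N k * twist \<theta> k (gen j) = const (1/2) * (gen j * gen (opp k) - const (Rmat \<theta> (opp k) j) * (gen (opp k) * gen j))"
  proof -
    have e1: "gen j * N k = const (1/2) * (gen j * gen (opp k))" by (simp add: N_def const_in)
    have e2: "N k * twist \<theta> k (gen j) = const (1/2) * (const (Rmat \<theta> (opp k) j) * (gen (opp k) * gen j))"
      by (simp only: N_def twist_gen R_opp mult.assoc const_in[of _ "gen (opp k)" "gen j", symmetric])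
    show ?thesis by (simp only: e1 e2 right_diff_distrib)
  qed
  then show ?case by (simp add: ts_left swap)
next
  case (add a b)
  have "(a + b) * N k - N k * twist \<theta> k (a + b) = (a * N k - N k * twist \<theta> k a) + (b * N k - N k * twist \<theta> k b)"
    by (simp add: algebra_simps twist_add)
  then show ?case using add by (simp add: ts_add)
next
  case (mult a b)
  have "(a * b) * N k - N k * twist \<theta> k (a * b) = a * (b * N k - N k * twist \<theta> k b) + (a * N k - N k * twist \<theta> k a) * twist \<theta> k b"
    by (simp add: algebra_simps twist_mult)
  then show ?case using mult by (simp add: ts_add ts_left ts_right)
qed



lemma ginvmat_opp: "ginvmat i j = (if j = opp i then 2 else 0)"
  by (cases i; cases j) (simp_all add: ginvmat_def Pmat_def)

lemma sum_if_opp: "(\<Sum>j\<in>UNIV. const (ginvmat i j) * h j) = const 2 * h (opp i)"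
proof -
  have "(\<Sum>j\<in>UNIV. const (ginvmat i j) * h j) = (\<Sum>j\<in>UNIV. if j = opp i then const 2 * h j else 0)"
    by (intro sum.cong refl) (simp add: ginvmat_opp)
  also have "\<dots> = const 2 * h (opp i)" by (simp add: sum.delta')
  finally show ?thesis .
qed

lemma ginv2_alt: "ginv2 \<theta> \<omega> \<eta> = (\<Sum>i\<in>UNIV. const 2 * (\<omega> i * twist \<theta> i (\<eta> (opp i))))"
  unfolding ginv2_def by (simp add: sum_if_opp[where h = "\<lambda>j. \<omega> _ * twist \<theta> _ (\<eta> j)"])

lemma opp_opp[simp]: "opp (opp i) = i" by (cases i) simp_all

lemma tw_N: "twist \<theta> i (N (opp i)) = const (1/2) * gen i"
  by (simp add: N_def twist_mult twist_gen)

lemma ginv2_NN: "ginv2 \<theta> N N = const (1/2) * (gen Z3 * gen Z1) + const (1/2) * (gen Z4 * gen Z2)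
     + const (1/2) * (gen Z1 * gen Z3) + const (1/2) * (gen Z2 * gen Z4)"
proof -
  have t: "const 2 * (N i * twist \<theta> i (N (opp i))) = const (1/2) * (gen (opp i) * gen i)" for i
  proof -
    have "const 2 * (N i * twist \<theta> i (N (opp i))) = const 2 * (const (1/2) * gen (opp i) * (const (1/2) * gen i))"
      by (simp only: tw_N) (simp add: N_def)
    also have "\<dots> = const 2 * (const (1/2) * (const (1/2) * (gen (opp i) * gen i)))"
      by (simp only: mult.assoc const_in[of _ "gen (opp i)" "gen i", symmetric])
    also have "\<dots> = const (1/2) * (gen (opp i) * gen i)"
      by (simp only: mult.assoc[symmetric] const_mult[symmetric]) simp
    finally show ?thesis .
  qed
  show ?thesis by (simp add: ginv2_alt t UNIV_idx add_ac)
qed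

lemma ginv2_dz: "ginv2 \<theta> (dz i) N = gen i"
proof -
  have "ginv2 \<theta> (dz i) N = (\<Sum>k\<in>UNIV. if k = i then const 2 * twist \<theta> k (N (opp k)) else 0)"
    unfolding ginv2_alt by (intro sum.cong refl) (simp add: dz_def)
  also have "\<dots> = const 2 * (const (1/2) * gen i)" by (simp add: sum.delta' tw_N)
  also have "\<dots> = gen i" by (simp only: mult.assoc[symmetric] const_mult[symmetric]) simp
  finally show ?thesis .
qed

lemma ginv2_lmul: "ginv2 \<theta> (lmul b \<omega>) \<eta> = b * ginv2 \<theta> \<omega> \<eta>"
  unfolding ginv2_alt by (simp add: sum_distrib_left lmul_apply mult.assoc const_in)


abbreviation JJ :: "real \<Rightarrow> fa set" where "JJ \<theta> \<equiv> Jid \<theta> {fS}"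

lemma I0_J: "x \<in> tsideal (rels \<theta>) \<Longrightarrow> x \<in> Jid \<theta> S"
  unfolding Jid_def by (erule ts_mono[rotated]) auto

lemma fS_J: "fS \<in> JJ \<theta>"
  unfolding Jid_def by (rule ts_base) simp

lemma tw2: "twist \<theta> i (gen a * gen b) = const (Rmat \<theta> a i * Rmat \<theta> b i) * (gen a * gen b)"
proof -
  have "twist \<theta> i (gen a * gen b) = const (Rmat \<theta> a i) * (const (Rmat \<theta> b i) * (gen a * gen b))"
    by (simp only: twist_mult twist_gen mult.assoc const_in[of _ "gen a" "gen b", symmetric])
  then show ?thesis by (simp add: const_mult mult.assoc)
qed

lemma twist_rel: "s \<in> rels \<theta> \<Longrightarrow> twist \<theta> i s \<in> tsideal (rels \<theta>)"
proof -
  assume "s \<in> rels \<theta>"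
  then obtain a b where s: "s = gen a * gen b - const (Rmat \<theta> b a) * (gen b * gen a)"
    by (auto simp: rels_def)
  have "twist \<theta> i s = const (Rmat \<theta> a i * Rmat \<theta> b i) * (gen a * gen b) - const (Rmat \<theta> b a) * (const (Rmat \<theta> b i * Rmat \<theta> a i) * (gen b * gen a))"
    by (simp add: s twist_diff twist_mult[of _ _ "const _"] tw2)
  also have "\<dots> = const (Rmat \<theta> a i * Rmat \<theta> b i) * s"
  proof -
    have cc: "const a * (const b * X) = const (a * b) * X" for a b X by (simp add: const_mult mult.assoc)
    show ?thesis by (simp add: s right_diff_distrib cc mult_ac)
  qed
  finally show ?thesis using \<open>s \<in> rels \<theta>\<close> by (simp add: ts_left ts_base)
qed

lemma twist_fS: "twist \<theta> i fS = fS"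
  unfolding fS_def by (simp only: twist_mult[of _ _ "const _"] twist_add twist_diff tw2 R_twist twist_const twist_one) simp

lemma twist_J: "x \<in> JJ \<theta> \<Longrightarrow> twist \<theta> i x \<in> JJ \<theta>"
  unfolding Jid_def
proof (rule twist_ideal)
  fix s assume "s \<in> rels \<theta> \<union> {fS}"
  then show "twist \<theta> i s \<in> tsideal (rels \<theta> \<union> {fS})"
  proof
    assume a: "s \<in> rels \<theta>" show ?thesis by (rule ts_mono[of "rels \<theta>"]) (auto intro: twist_rel a)
  next
    assume "s \<in> {fS}" then show ?thesis by (simp add: twist_fS ts_base)
  qed
qed

lemma eqOmega0: "eqOmega \<theta> \<omega> 0 \<longleftrightarrow> (\<forall>k. \<omega> k \<in> tsideal (rels \<theta>))"
  by (simp add: eqOmega_def eqA_def)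

lemma qz_zero: "0 \<in> qzero \<theta> S"
  by (rule qzero.zeroA) (simp add: eqOmega0 ts_zero)

lemma qz_I0: "(\<And>k. \<omega> k \<in> tsideal (rels \<theta>)) \<Longrightarrow> \<omega> \<in> qzero \<theta> S"
  by (rule qzero.zeroA) (simp add: eqOmega0)

lemma qz_lmul: "\<omega> \<in> qzero \<theta> S \<Longrightarrow> lmul u \<omega> \<in> qzero \<theta> S"
proof (induction rule: qzero.induct)
  case (zeroA \<omega>) then show ?case by (intro qz_I0) (simp add: eqOmega0 lmul_apply ts_left)
next
  case (left x \<omega>) then show ?case
    by (simp add: lmul_lmul qzero.left Jid_def ts_left)
next
  case (right y \<omega>)
  have "lmul u (rmul \<theta> \<omega> y) = rmul \<theta> (lmul u \<omega>) y" by (simp add: rmul_lmul)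
  then show ?case using right by (simp add: qzero.right)
next
  case (add \<omega> \<eta>)
  have e1: "(\<lambda>a. \<omega> a + \<eta> a) = \<omega> + \<eta>" by (rule ext) simp
  show ?case by ((subst e1)?, subst lmul_add2, rule qzero.add[OF add.IH])
qed

lemma qz_rmul: "\<omega> \<in> qzero \<theta> S \<Longrightarrow> rmul \<theta> \<omega> v \<in> qzero \<theta> S"
proof (induction rule: qzero.induct)
  case (zeroA \<omega>) then show ?case by (intro qz_I0) (simp add: eqOmega0 rmul_apply ts_right)
next
  case (left x \<omega>) then show ?case
    by (simp add: rmul_lmul qzero.left)
next
  case (right y \<omega>) then show ?case
    by (simp add: rmul_rmul qzero.right Jid_def ts_right)
next
  case (add \<omega> \<eta>)
  have e1: "(\<lambda>a. \<omega> a + \<eta> a) = \<omega> + \<eta>" by (rule ext) simp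
  show ?case by ((subst e1)?, subst rmul_add1, rule qzero.add[OF add.IH])
qed

lemma ginv2_qz: "\<omega> \<in> qzero \<theta> {fS} \<Longrightarrow> ginv2 \<theta> \<omega> N \<in> JJ \<theta>"
proof (induction rule: qzero.induct)
  case (zeroA \<omega>) then show ?case
    unfolding ginv2_alt by (intro ts_sum[of _ _ "rels \<theta> \<union> {fS}", folded Jid_def] ts_left ts_right I0_J) (simp add: eqOmega0)
next
  case (left x \<omega>) then show ?case
    unfolding ginv2_alt Jid_def by (intro ts_sum ts_left ts_right) (simp add: lmul_apply mult.assoc ts_left ts_right)
next
  case (right y \<omega>)
  have "twist \<theta> i y \<in> JJ \<theta>" for i using right twist_J by blast
  have "const 2 * (rmul \<theta> \<omega> y i * twist \<theta> i (N (opp i))) \<in> JJ \<theta>" for i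
  proof -
    have "twist \<theta> i y \<in> JJ \<theta>" by fact
    then have "\<omega> i * twist \<theta> i y \<in> JJ \<theta>" unfolding Jid_def by (rule ts_left)
    then have "\<omega> i * twist \<theta> i y * twist \<theta> i (N (opp i)) \<in> JJ \<theta>" unfolding Jid_def by (rule ts_right)
    then show ?thesis unfolding Jid_def rmul_apply by (rule ts_left)
  qed
  then show ?case
    unfolding ginv2_alt Jid_def by (intro ts_sum)
next
  case (add \<omega> \<eta>)
  have "ginv2 \<theta> (\<lambda>a. \<omega> a + \<eta> a) N = ginv2 \<theta> \<omega> N + ginv2 \<theta> \<eta> N"
    unfolding ginv2_alt by (simp add: sum.distrib distrib_left distrib_right)
  then show ?case using add by (simp add: Jid_def ts_add)
qed



lemma dA_rel: "s \<in> rels \<theta> \<Longrightarrow> dA \<theta> s = 0"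
proof -
  assume "s \<in> rels \<theta>"
  then obtain a b where s: "s = gen a * gen b - const (Rmat \<theta> b a) * (gen b * gen a)"
    by (auto simp: rels_def)
  have cc: "const (Rmat \<theta> b a) * (const (Rmat \<theta> a b) * X) = X" for X
    using R_inv[of \<theta> b a] by (simp add: mult.assoc[symmetric] const_mult[symmetric])
  show ?thesis
  proof (rule ext)
    fix k
    show "dA \<theta> s k = 0 k"
      by (simp add: s dA_diff dA_const_mult leibniz lmul_apply rmul_apply dz_def twist_gen
            distrib_left right_diff_distrib cc)
  qed
qed


lemma N_comm_qz: "lmul u (rmul \<theta> N v) - lmul (u * v) N \<in> qzero \<theta> S"
proof (rule qz_I0)
  fix k
  have "(lmul u (rmul \<theta> N v) - lmul (u * v) N) k = - (u * (v * N k - N k * twist \<theta> k v))"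
    by (simp add: lmul_apply rmul_apply algebra_simps)
  then show "(lmul u (rmul \<theta> N v) - lmul (u * v) N) k \<in> tsideal (rels \<theta>)"
    by (simp add: ts_neg ts_left N_central)
qed

lemma dA_J: "a \<in> JJ \<theta> \<Longrightarrow> \<exists>c. dA \<theta> a - lmul c N \<in> qzero \<theta> {fS}"
  unfolding Jid_def
proof (induction rule: tsideal.induct)
  case zero
  have "dA \<theta> 0 - lmul 0 N = (0 :: form1)" by simp
  then show ?case using qz_zero by metis
next
  case (gen s u v)
  let ?T1 = "rmul \<theta> (dA \<theta> u) (s * v)" and ?T2 = "lmul u (rmul \<theta> (dA \<theta> s) v)"
    and ?T3 = "lmul (u * s) (dA \<theta> v)"
  have sJ: "s \<in> JJ \<theta>" using gen unfolding Jid_def by (simp add: ts_base)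
  have d: "dA \<theta> (fmul (fmul u s) v) = ?T1 + ?T2 + ?T3"
    by (simp only: fmul_eq leibniz rmul_add1 rmul_rmul rmul_lmul)
  have T1: "?T1 \<in> qzero \<theta> {fS}"
    by (rule qzero.right) (use sJ in \<open>simp add: Jid_def ts_right\<close>)
  have T3: "?T3 \<in> qzero \<theta> {fS}"
    by (rule qzero.left) (use sJ in \<open>simp add: Jid_def ts_left\<close>)
  obtain c where T2: "?T2 - lmul c N \<in> qzero \<theta> {fS}"
  proof (cases "s = fS")
    case True
    then show ?thesis using that[of "u * v"] N_comm_qz[of u \<theta> v "{fS}"] by (simp add: nu_eq)
  next
    case False
    then have "s \<in> rels \<theta>" using gen by simp
    then have "?T2 - lmul 0 N = 0" by (simp add: dA_rel)
    then show ?thesis using that[of 0] qz_zero by metis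
  qed
  have "dA \<theta> (fmul (fmul u s) v) - lmul c N = (?T1 + ?T3) + (?T2 - lmul c N)"
    unfolding d by (rule ext) simp
  then show ?case using qzero.add[OF qzero.add[OF T1 T3] T2] by metis
next
  case (add x y)
  then obtain c1 c2 where c1: "dA \<theta> x - lmul c1 N \<in> qzero \<theta> {fS}" and c2: "dA \<theta> y - lmul c2 N \<in> qzero \<theta> {fS}"
    by blast
  have "dA \<theta> (x + y) - lmul (c1 + c2) N = (dA \<theta> x - lmul c1 N) + (dA \<theta> y - lmul c2 N)"
    by (rule ext) (simp add: dA_add lmul_apply distrib_right)
  then show ?case using qzero.add[OF c1 c2] by metis
qed

lemma Nsub_qz: "\<eta> \<in> Nsub \<theta> {fS} \<Longrightarrow> \<exists>b. \<eta> - lmul b N \<in> qzero \<theta> {fS}"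
proof (induction rule: Nsub.induct)
  case zero
  have "0 - lmul 0 N = (0 :: form1)" by simp
  then show ?case using qz_zero by metis
next
  case (gen a u v)
  obtain c where c: "dA \<theta> a - lmul c N \<in> qzero \<theta> {fS}" using dA_J[OF gen] by blast
  have q1: "lmul u (rmul \<theta> (dA \<theta> a - lmul c N) v) \<in> qzero \<theta> {fS}"
    by (intro qz_lmul qz_rmul c)
  have q2: "lmul (u * c) (rmul \<theta> N v) - lmul (u * c * v) N \<in> qzero \<theta> {fS}"
    by (rule N_comm_qz)
  have "lmul u (rmul \<theta> (dA \<theta> a) v) - lmul (u * c * v) N =
        lmul u (rmul \<theta> (dA \<theta> a - lmul c N) v) + (lmul (u * c) (rmul \<theta> N v) - lmul (u * c * v) N)"
    by (rule ext) (simp add: lmul_apply rmul_apply algebra_simps)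
  then show ?case using qzero.add[OF q1 q2] by metis
next
  case (add \<omega> \<eta>)
  then obtain b1 b2 where c1: "\<omega> - lmul b1 N \<in> qzero \<theta> {fS}" and c2: "\<eta> - lmul b2 N \<in> qzero \<theta> {fS}"
    by blast
  have "(\<omega> + \<eta>) - lmul (b1 + b2) N = (\<omega> - lmul b1 N) + (\<eta> - lmul b2 N)"
    by (rule ext) (simp add: lmul_apply distrib_right)
  then show ?case using qzero.add[OF c1 c2] by metis
qed



lemma ginvNN_J: "ginv2 \<theta> N N - 1 \<in> JJ \<theta>"
proof -
  let ?h = "const (1/2)"
  have hh: "?h * Y + ?h * Y = Y" for Y
  proof -
    have "?h * Y + ?h * Y = (?h + ?h) * Y" by (rule distrib_right[symmetric])
    also have "?h + ?h = 1" by (simp add: const_add[symmetric])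
    finally show ?thesis by simp
  qed
  have e: "ginv2 \<theta> N N - 1 = ?h * (gen Z3 * gen Z1 - const (Rmat \<theta> Z1 Z3) * (gen Z1 * gen Z3))
      + ?h * (gen Z4 * gen Z2 - const (Rmat \<theta> Z2 Z4) * (gen Z2 * gen Z4))
      + (((?h * (gen Z1 * gen Z3) + ?h * (gen Z1 * gen Z3)) + (?h * (gen Z2 * gen Z4) + ?h * (gen Z2 * gen Z4))) - 1)"
    by (simp add: ginv2_NN R_vals algebra_simps)
  have m: "((?h * (gen Z1 * gen Z3) + ?h * (gen Z1 * gen Z3)) + (?h * (gen Z2 * gen Z4) + ?h * (gen Z2 * gen Z4))) - 1
      = const 2 * fS"
  proof -
    have "const 2 * fS = (const 2 * ?h) * (gen Z1 * gen Z3 + gen Z2 * gen Z4 - 1)"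
      unfolding fS_def by (simp only: mult.assoc)
    also have "const 2 * ?h = 1" by (simp add: const_mult[symmetric])
    finally show ?thesis by (simp only: hh) simp
  qed
  have a: "?h * (gen Z3 * gen Z1 - const (Rmat \<theta> Z1 Z3) * (gen Z1 * gen Z3)) \<in> JJ \<theta>"
    by (intro I0_J ts_left swap)
  have b: "?h * (gen Z4 * gen Z2 - const (Rmat \<theta> Z2 Z4) * (gen Z2 * gen Z4)) \<in> JJ \<theta>"
    by (intro I0_J ts_left swap)
  have c: "const 2 * fS \<in> JJ \<theta>" using fS_J unfolding Jid_def by (rule ts_left)
  show ?thesis unfolding e m using a b c unfolding Jid_def by (intro ts_add)
qed

theorem proposition4p7:
  fixes \<theta> :: real and f :: fa and \<nu> :: form1
  defines "f \<equiv> fmul (const (1/2))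
                  (fmul (gen Z1) (gen Z3) + fmul (gen Z2) (gen Z4) - const 1)"
      and "\<nu> \<equiv> dA \<theta> f"
  shows "(\<forall>a. eqA \<theta> (fmul a f) (fmul f a))
     \<and> eqOmega \<theta> \<nu> (\<Sum>i\<in>UNIV. \<Sum>j\<in>UNIV. lmul (fmul (const (gmet i j)) (gen i)) (dz j))
     \<and> central_form \<theta> \<nu>
     \<and> eqB \<theta> {f} (ginv2 \<theta> \<nu> \<nu>) (const 1)
     \<and> nc_hypersurface \<theta> {f}
     \<and> N_free_basis \<theta> {f} \<nu>
     \<and> (\<forall>i. eqQ \<theta> {f} (Proj \<theta> \<nu> (dz i)) (dz i - lmul (gen i) \<nu>))"
proof -
  have fdef: "f = fS" by (simp add: f_def fS_def)
  have nudef: "\<nu> = N" by (simp add: \<nu>_def fdef nu_eq)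
  have c1: "\<forall>a. eqA \<theta> (fmul a fS) (fmul fS a)" by (simp add: eqA_def f_central)
  have sumN: "(\<Sum>i\<in>UNIV. \<Sum>j\<in>UNIV. lmul (fmul (const (gmet i j)) (gen i)) (dz j)) = N"
  proof (rule ext)
    fix k show "(\<Sum>i\<in>UNIV. \<Sum>j\<in>UNIV. lmul (fmul (const (gmet i j)) (gen i)) (dz j)) k = N k"
      by (cases k) (simp_all add: sum_fun_apply lmul_apply dz_def UNIV_idx gmet_def Pmat_def N_def)
  qed
  have c2: "eqOmega \<theta> N (\<Sum>i\<in>UNIV. \<Sum>j\<in>UNIV. lmul (fmul (const (gmet i j)) (gen i)) (dz j))"
    unfolding sumN by (simp add: eqOmega_def eqA_def ts_zero)
  have c3: "central_form \<theta> N"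
    by (simp add: central_form_def eqOmega_def eqA_def lmul_apply rmul_apply N_central)
  have c4: "eqB \<theta> {fS} (ginv2 \<theta> N N) (const 1)"
    using ginvNN_J by (simp add: eqB_def)
  have Ngen: "lmul b N \<in> Nsub \<theta> {fS}" for b
    using Nsub.gen[OF fS_J, of b \<theta> 1] by (simp add: nu_eq)
  have c6: "N_free_basis \<theta> {fS} N"
    unfolding N_free_basis_def
  proof (intro conjI allI impI iffI)
    show "inN \<theta> {fS} N"
      unfolding inN_def eqQ_def using Ngen[of 1] qz_zero by force
  next
    fix \<omega> assume "inN \<theta> {fS} \<omega>"
    then obtain \<eta> where \<eta>: "\<eta> \<in> Nsub \<theta> {fS}" "\<omega> - \<eta> \<in> qzero \<theta> {fS}"
      unfolding inN_def eqQ_def by blast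
    obtain b where b: "\<eta> - lmul b N \<in> qzero \<theta> {fS}" using Nsub_qz[OF \<eta>(1)] by blast
    have "\<omega> - lmul b N = (\<omega> - \<eta>) + (\<eta> - lmul b N)" by (rule ext) simp
    then have "\<omega> - lmul b N \<in> qzero \<theta> {fS}" using qzero.add[OF \<eta>(2) b] by metis
    then show "\<exists>b. eqQ \<theta> {fS} \<omega> (lmul b N)" unfolding eqQ_def by blast
  next
    fix \<omega> assume "\<exists>b. eqQ \<theta> {fS} \<omega> (lmul b N)"
    then show "inN \<theta> {fS} \<omega>" unfolding inN_def using Ngen by blast
  next
    fix b assume "eqQ \<theta> {fS} (lmul b N) 0"
    then have "lmul b N \<in> qzero \<theta> {fS}" unfolding eqQ_def by simp
    then have "ginv2 \<theta> (lmul b N) N \<in> JJ \<theta>" by (rule ginv2_qz)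
    then have x: "b * ginv2 \<theta> N N \<in> JJ \<theta>" by (simp add: ginv2_lmul)
    have y: "b * (ginv2 \<theta> N N - 1) \<in> JJ \<theta>" using ginvNN_J unfolding Jid_def by (rule ts_left)
    have "b = b * ginv2 \<theta> N N - b * (ginv2 \<theta> N N - 1)" by (simp add: algebra_simps)
    then have "b \<in> JJ \<theta>" using x y unfolding Jid_def by (metis ts_diff)
    then show "eqB \<theta> {fS} b 0" by (simp add: eqB_def)
  qed
  have c5: "nc_hypersurface \<theta> {fS}"
    unfolding nc_hypersurface_def using c3 c4 c6 by blast
  have c7: "\<forall>i. eqQ \<theta> {fS} (Proj \<theta> N (dz i)) (dz i - lmul (gen i) N)"
    by (simp add: eqQ_def Proj_def ginv2_dz qz_zero)
  show ?thesis unfolding nudef fdef using c1 c2 c3 c4 c5 c6 c7 by blast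
qed


end
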